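(* Let $S$ be a category and $x,y\in S$. Then $\varepsilon_S(x)=\varepsilon_S(y)$ in $\mathrm{U_{mon}}(S)$ if and only if either $x=y$ or both $x$ and $y$ are identities of $S$. In particular, the restriction of $\varepsilon_S$ to every hom-set $S(a,b)$ is one-to-one.
   Context: Categories are arrow-only: a set $S$ with partial associative multiplication, identities $\mathrm{Id}\,S$, source/target identities $\mathrm{s}(x),\mathrm{t}(x)$; $S(a,b)=\{x:\mathrm{s}(x)=a,\mathrm{t}(x)=b\}$. $\mathrm{U_{mon}}(S)$ is the monoid presented by generators $\varepsilon_S(x)$ ($x\in S$) and relations $\varepsilon_S(e)=1$ ($e\in\mathrm{Id}\,S$), $\varepsilon_S(x)\varepsilon_S(y)=\varepsilon_S(xy)$ whenever $xy$ is defined. *)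

theory Defs
  imports Main
begin

text \<open>Arrow-only categories. A category is given by its set of arrows S and a
partial multiplication m (m x y = None means xy is undefined).\<close>

definition is_identity :: "'a set \<Rightarrow> ('a \<Rightarrow> 'a \<Rightarrow> 'a option) \<Rightarrow> 'a \<Rightarrow> bool" where
  "is_identity S m e \<longleftrightarrow> e \<in> S \<and>
     (\<forall>x\<in>S. (m e x \<noteq> None \<longrightarrow> m e x = Some x) \<and> (m x e \<noteq> None \<longrightarrow> m x e = Some x))"

definition category :: "'a set \<Rightarrow> ('a \<Rightarrow> 'a \<Rightarrow> 'a option) \<Rightarrow> bool" where
  "category S m \<longleftrightarrow>
     (\<forall>x y z. m x y = Some z \<longrightarrow> x \<in> S \<and> y \<in> S \<and> z \<in> S) \<and>
     (\<forall>x\<in>S. \<forall>y\<in>S. \<forall>z\<in>S.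
        Option.bind (m x y) (\<lambda>w. m w z) = Option.bind (m y z) (\<lambda>v. m x v)) \<and>
     (\<forall>x\<in>S. \<forall>y\<in>S. \<forall>z\<in>S.
        (Option.bind (m y z) (\<lambda>v. m x v) \<noteq> None) \<longleftrightarrow> (m x y \<noteq> None \<and> m y z \<noteq> None)) \<and>
     (\<forall>x\<in>S. \<exists>e f. is_identity S m e \<and> is_identity S m f \<and> m e x \<noteq> None \<and> m x f \<noteq> None)"

definition src :: "'a set \<Rightarrow> ('a \<Rightarrow> 'a \<Rightarrow> 'a option) \<Rightarrow> 'a \<Rightarrow> 'a" where
  "src S m x = (THE e. is_identity S m e \<and> m e x \<noteq> None)"

definition tgt :: "'a set \<Rightarrow> ('a \<Rightarrow> 'a \<Rightarrow> 'a option) \<Rightarrow> 'a \<Rightarrow> 'a" where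
  "tgt S m x = (THE f. is_identity S m f \<and> m x f \<noteq> None)"

definition hom :: "'a set \<Rightarrow> ('a \<Rightarrow> 'a \<Rightarrow> 'a option) \<Rightarrow> 'a \<Rightarrow> 'a \<Rightarrow> 'a set" where
  "hom S m a b = {x \<in> S. src S m x = a \<and> tgt S m x = b}"

text \<open>U_mon(S) is the free monoid on S (words = lists) modulo the monoid congruence
generated by [e] ~ [] for identities e and [x,y] ~ [xy] whenever xy is defined.
umon_rel S m is that congruence; eps(x) is the class of the word [x].\<close>
inductive umon_rel :: "'a set \<Rightarrow> ('a \<Rightarrow> 'a \<Rightarrow> 'a option) \<Rightarrow> 'a list \<Rightarrow> 'a list \<Rightarrow> bool"
  for S m where
  refl: "umon_rel S m xs xs"
| sym: "umon_rel S m xs ys \<Longrightarrow> umon_rel S m ys xs"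
| trans: "umon_rel S m xs ys \<Longrightarrow> umon_rel S m ys zs \<Longrightarrow> umon_rel S m xs zs"
| compat: "umon_rel S m xs ys \<Longrightarrow> umon_rel S m (us @ xs @ vs) (us @ ys @ vs)"
| ident: "is_identity S m e \<Longrightarrow> umon_rel S m [e] []"
| mult: "x \<in> S \<Longrightarrow> y \<in> S \<Longrightarrow> m x y = Some z \<Longrightarrow> umon_rel S m [x, y] [z]"

definition eps_eq :: "'a set \<Rightarrow> ('a \<Rightarrow> 'a \<Rightarrow> 'a option) \<Rightarrow> 'a \<Rightarrow> 'a \<Rightarrow> bool" where
  "eps_eq S m x y \<longleftrightarrow> umon_rel S m [x] [y]"

end

theory Submission
  imports Defs
begin

definition push :: "'a set \<Rightarrow> ('a \<Rightarrow> 'a \<Rightarrow> 'a option) \<Rightarrow> 'a list \<Rightarrow> 'a \<Rightarrow> 'a list" where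
  "push S m s x = (if is_identity S m x then s else case s of [] \<Rightarrow> [x]
     | t # s' \<Rightarrow> (case m t x of None \<Rightarrow> x # t # s'
                 | Some w \<Rightarrow> if is_identity S m w then s' else w # s'))"

fun red :: "'a set \<Rightarrow> ('a \<Rightarrow> 'a \<Rightarrow> 'a option) \<Rightarrow> 'a list \<Rightarrow> bool" where
  "red S m (a # b # r) = (m b a = None \<and> \<not> is_identity S m a \<and> red S m (b # r))"
| "red S m [a] = (\<not> is_identity S m a)"
| "red S m [] = True"

lemma cat_A1: "category S m \<Longrightarrow> m a b = Some c \<Longrightarrow> a \<in> S \<and> b \<in> S \<and> c \<in> S"
  unfolding category_def by (elim conjE) (drule spec[of _ a], drule spec[of _ b], drule spec[of _ c], simp)
lemma cat_assoc: "category S m \<Longrightarrow> a \<in> S \<Longrightarrow> b \<in> S \<Longrightarrow> c \<in> S \<Longrightarrow>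
   Option.bind (m a b) (\<lambda>w. m w c) = Option.bind (m b c) (\<lambda>v. m a v)"
  unfolding category_def by (elim conjE) (drule bspec, assumption)+
lemma cat_def3: "category S m \<Longrightarrow> a \<in> S \<Longrightarrow> b \<in> S \<Longrightarrow> c \<in> S \<Longrightarrow>
   (Option.bind (m b c) (\<lambda>v. m a v) \<noteq> None) \<longleftrightarrow> (m a b \<noteq> None \<and> m b c \<noteq> None)"
  unfolding category_def by (elim conjE) (drule bspec, assumption)+

lemma idL: "is_identity S m e \<Longrightarrow> a \<in> S \<Longrightarrow> m e a = Some c \<Longrightarrow> c = a"
  unfolding is_identity_def by auto
lemma idR: "is_identity S m e \<Longrightarrow> a \<in> S \<Longrightarrow> m a e = Some c \<Longrightarrow> c = a"
  unfolding is_identity_def by auto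

lemma push_red: "category S m \<Longrightarrow> red S m s \<Longrightarrow> red S m (push S m s x)"
proof (cases s)
  case Nil
  then show ?thesis by (auto simp: push_def)
next
  case (Cons t s')
  assume C: "category S m" and R: "red S m s"
  show ?thesis
  proof (cases "is_identity S m x")
    case True then show ?thesis using R by (simp add: push_def)
  next
    case False
    show ?thesis
    proof (cases "m t x")
      case None then show ?thesis using R False Cons by (simp add: push_def)
    next
      case (Some w)
      have tx: "t \<in> S" "x \<in> S" "w \<in> S" using cat_A1[OF C Some] by auto
      show ?thesis
      proof (cases s')
        case Nil then show ?thesis using Cons Some False by (simp add: push_def)
      next
        case (Cons t' s'')
        have r1: "m t' t = None" "red S m s'" using R \<open>s = t # s'\<close> Cons by auto
        have "m t' w = None"
        proof (rule ccontr)
          assume "m t' w \<noteq> None"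
          then obtain q where q: "m t' w = Some q" by auto
          have "t' \<in> S" using cat_A1[OF C q] by auto
          from cat_def3[OF C this tx(1) tx(2)] q Some r1 show False by auto
        qed
        then show ?thesis using \<open>s = t # s'\<close> Cons Some False r1 by (simp add: push_def)
      qed
    qed
  qed
qed

lemma push_red_foldl: "category S m \<Longrightarrow> red S m s \<Longrightarrow> red S m (foldl (push S m) s xs)"
  by (induction xs arbitrary: s) (auto simp: push_red)

lemma push_mult:
  assumes C: "category S m" and R: "red S m s" and xS: "x \<in> S" and yS: "y \<in> S"
    and xy: "m x y = Some z"
  shows "push S m (push S m s x) y = push S m s z"
proof -
  have zS: "z \<in> S" using cat_A1[OF C xy] by auto
  show ?thesis
  proof (cases "is_identity S m x")
    case True
    then have "z = y" using idL[OF True yS xy] by simp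
    then show ?thesis using True by (simp add: push_def)
  next
    case xn: False
    show ?thesis
    proof (cases "is_identity S m y")
      case True
      then have "z = x" using idR[OF True xS xy] by simp
      then show ?thesis using True by (simp add: push_def)
    next
      case yn: False
      show ?thesis
      proof (cases s)
        case Nil
        then show ?thesis using xn yn xy by (simp add: push_def)
      next
        case (Cons t s')
        show ?thesis
        proof (cases "m t x")
          case None
          have "m t z = None"
          proof (rule ccontr)
            assume "m t z \<noteq> None"
            then obtain q where q: "m t z = Some q" by auto
            have "t \<in> S" using cat_A1[OF C q] by auto
            from cat_def3[OF C this xS yS] q None xy show False by auto
          qed
          then show ?thesis using None Cons xn yn xy by (simp add: push_def)
        next
          case (Some w)
          have tS: "t \<in> S" "w \<in> S" using cat_A1[OF C Some] by auto
          have as: "m w y = m t z" using cat_assoc[OF C tS(1) xS yS] Some xy by simp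
          have "m t z \<noteq> None" using cat_def3[OF C tS(1) xS yS] Some xy by simp
          then obtain r where r: "m t z = Some r" by auto
          have wy: "m w y = Some r" using as r by simp
          show ?thesis
          proof (cases "is_identity S m w")
            case False
            have tn: "\<not> is_identity S m t" using R Cons by (cases s') auto
            have "is_identity S m z \<Longrightarrow> r = t" using idR[of S m z t r] tS(1) r by blast
            then show ?thesis using Some Cons xn yn r wy False tn by (auto simp add: push_def)
          next
            case wi: True
            have ry: "r = y" using idL[OF wi yS wy] .
            have "push S m s' y = y # s'"
            proof (cases s')
              case Nil then show ?thesis using yn by (simp add: push_def)
            next
              case (Cons t' s'')
              have r1: "m t' t = None" using R \<open>s = t # s'\<close> Cons by auto
              have "m t' y = None"
              proof (rule ccontr)
                assume "m t' y \<noteq> None"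
                then obtain q where q: "m t' y = Some q" by auto
                have t'S: "t' \<in> S" using cat_A1[OF C q] by auto
                have "m t' w \<noteq> None" using cat_def3[OF C t'S tS(2) yS] wy q ry by simp
                then obtain p where p: "m t' w = Some p" by auto
                have "p = t'" using idR[OF wi t'S p] .
                then show False using cat_def3[OF C t'S tS(1) xS] Some p r1 by simp
              qed
              then show ?thesis using Cons yn by (simp add: push_def)
            qed
            moreover have "is_identity S m z \<Longrightarrow> r = t" using idR[of S m z t r] tS(1) r by blast
            ultimately show ?thesis using Some Cons xn yn r wi ry by (auto simp add: push_def)
          qed
        qed
      qed
    qed
  qed
qed

lemma umon_inv:
  assumes C: "category S m"
  shows "umon_rel S m xs ys \<Longrightarrow> red S m s \<Longrightarrow> foldl (push S m) s xs = foldl (push S m) s ys"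
proof (induction xs ys arbitrary: s rule: umon_rel.induct)
  case (refl xs) then show ?case by simp
next
  case (sym xs ys) then show ?case by simp
next
  case (trans xs ys zs) then show ?case by simp
next
  case (compat xs ys us vs)
  have "red S m (foldl (push S m) s us)" using push_red_foldl[OF C compat.prems] .
  then show ?case using compat.IH by simp
next
  case (ident e) then show ?case by (simp add: push_def)
next
  case (mult x y z) then show ?case using push_mult[OF C] by simp
qed

lemma id_src: assumes C: "category S m" and e: "is_identity S m e"
  shows "src S m e = e"
proof -
  have eS: "e \<in> S" using e unfolding is_identity_def by auto
  have uniq: "f = e" if f: "is_identity S m f" "m f e \<noteq> None" for f
  proof -
    have fS: "f \<in> S" using f unfolding is_identity_def by auto
    obtain q where q: "m f e = Some q" using f by auto
    show ?thesis using idL[OF f(1) eS q] idR[OF e fS q] by simp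
  qed
  obtain f where f: "is_identity S m f" "m f e \<noteq> None"
  proof -
    have "\<forall>x\<in>S. \<exists>e f. is_identity S m e \<and> is_identity S m f \<and> m e x \<noteq> None \<and> m x f \<noteq> None"
      using C unfolding category_def by (elim conjE)
    then show ?thesis using eS that by (drule_tac bspec) (assumption, blast)
  qed
  have "f = e" using uniq f .
  then have ex: "is_identity S m e \<and> m e e \<noteq> None" using f by simp
  show ?thesis unfolding src_def
    by (rule the_equality) (use ex uniq in auto)
qed

theorem lemma3p10:
  assumes "category S m" and "x \<in> S" and "y \<in> S"
  shows "(eps_eq S m x y \<longleftrightarrow> x = y \<or> (is_identity S m x \<and> is_identity S m y))
         \<and> (\<forall>a b. \<forall>u\<in>hom S m a b. \<forall>v\<in>hom S m a b. eps_eq S m u v \<longrightarrow> u = v)"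
proof -
  have main: "eps_eq S m u v \<longleftrightarrow> u = v \<or> (is_identity S m u \<and> is_identity S m v)" for u v
  proof
    assume "eps_eq S m u v"
    then have "foldl (push S m) [] [u] = foldl (push S m) [] [v]"
      using umon_inv[OF assms(1)] unfolding eps_eq_def by fastforce
    then show "u = v \<or> (is_identity S m u \<and> is_identity S m v)"
      by (auto simp: push_def split: if_splits)
  next
    assume "u = v \<or> (is_identity S m u \<and> is_identity S m v)"
    then show "eps_eq S m u v"
    proof
      assume "u = v" then show ?thesis by (simp add: eps_eq_def umon_rel.refl)
    next
      assume "is_identity S m u \<and> is_identity S m v"
      then show ?thesis unfolding eps_eq_def
        by (meson umon_rel.ident umon_rel.sym umon_rel.trans)
    qed
  qed
  have hom: "u = v" if "u \<in> hom S m a b" "v \<in> hom S m a b" "eps_eq S m u v" for a b u v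
  proof -
    from main that(3) consider "u = v" | "is_identity S m u" "is_identity S m v" by blast
    then show ?thesis
    proof cases
      case 2
      then show ?thesis using that(1,2) id_src[OF assms(1)] unfolding hom_def by auto
    qed simp
  qed
  show ?thesis using main hom by blast
qed

end
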